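(* Let $L$ be a complex Leibniz algebra, let $I$ be the ideal generated by all squares $[x,x]$, $x\in L$, and suppose $L/I\cong\mathfrak{e}(2)$ and $I$, as a right $\mathfrak{e}(2)$-module via $(i,x+I)\mapsto[i,x]$, is isomorphic to the three-dimensional module with basis $X_1,X_2,X_3$ and action $(X_1,p_-)=-X_3$, $(X_2,p_+)=X_3$, $(X_1,l)=-X_1$, $(X_2,l)=X_2$ (all other products zero). Then there exist $\alpha_1,\alpha_2\in\mathbb C$ and a basis $\{l,p_+,p_-,X_1,X_2,X_3\}$ of $L$ (with $X_i\in I$) in which the only nonzero products are $[l,p_+]=p_+$, $[p_+,l]=-p_+$, $[l,p_-]=-p_-$, $[p_-,l]=p_-$, $[l,l]=\alpha_1X_3$, $[p_+,p_-]=\alpha_2X_3$, $[p_-,p_+]=-\alpha_2X_3$, $[X_1,p_-]=-X_3$, $[X_1,l]=-X_1$, $[X_2,p_+]=X_3$, $[X_2,l]=X_2$. (The algebra with this table is denoted $K_2(\alpha_1,\alpha_2)$.)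
   Context: A (right) Leibniz algebra is a vector space $L$ with a bilinear bracket satisfying $[[x,y],z]=[[x,z],y]+[x,[y,z]]$. The ideal $I$ generated by squares satisfies $[L,I]=0$, so $L/I$ is a Lie algebra and $I$ is a right $L/I$-module via $(i,x+I)\mapsto[i,x]$. $\mathfrak{e}(2)$ is the complex Lie algebra with basis $\{l,p_+,p_-\}$ and brackets $[l,p_+]=p_+$, $[l,p_-]=-p_-$, $[p_+,p_-]=0$. *)

theory Defs
  imports Complex_Main
begin

definition leibniz_algebra ::
  "(complex \<Rightarrow> 'a::ab_group_add \<Rightarrow> 'a) \<Rightarrow> ('a \<Rightarrow> 'a \<Rightarrow> 'a) \<Rightarrow> bool" where
  "leibniz_algebra smul br \<longleftrightarrow>
     vector_space smul \<and>
     (\<forall>x. Vector_Spaces.linear smul smul (br x)) \<and>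
     (\<forall>y. Vector_Spaces.linear smul smul (\<lambda>x. br x y)) \<and>
     (\<forall>x y z. br (br x y) z = br (br x z) y + br x (br y z))"

definition is_ideal ::
  "(complex \<Rightarrow> 'a::ab_group_add \<Rightarrow> 'a) \<Rightarrow> ('a \<Rightarrow> 'a \<Rightarrow> 'a) \<Rightarrow> 'a set \<Rightarrow> bool" where
  "is_ideal smul br J \<longleftrightarrow> module.subspace smul J \<and>
     (\<forall>x\<in>J. \<forall>y. br x y \<in> J \<and> br y x \<in> J)"

definition sq_ideal ::
  "(complex \<Rightarrow> 'a::ab_group_add \<Rightarrow> 'a) \<Rightarrow> ('a \<Rightarrow> 'a \<Rightarrow> 'a) \<Rightarrow> 'a set" where
  "sq_ideal smul br = \<Inter>{J. is_ideal smul br J \<and> (\<forall>x. br x x \<in> J)}"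

text \<open>The Lie algebra e(2) realised on complex^3, coordinates w.r.t. the
  basis (l, p_+, p_-): [l,p_+] = p_+, [l,p_-] = -p_-, [p_+,p_-] = 0.\<close>

type_synonym c3 = "complex \<times> complex \<times> complex"

definition c3_add :: "c3 \<Rightarrow> c3 \<Rightarrow> c3" where
  "c3_add u v = (case u of (a1,a2,a3) \<Rightarrow> case v of (b1,b2,b3) \<Rightarrow> (a1+b1, a2+b2, a3+b3))"

definition c3_smul :: "complex \<Rightarrow> c3 \<Rightarrow> c3" where
  "c3_smul c u = (case u of (a1,a2,a3) \<Rightarrow> (c*a1, c*a2, c*a3))"

definition e2_br :: "c3 \<Rightarrow> c3 \<Rightarrow> c3" where
  "e2_br u v = (case u of (a1,a2,a3) \<Rightarrow> case v of (b1,b2,b3) \<Rightarrow>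
      (0, a1*b2 - a2*b1, a3*b1 - a1*b3))"

text \<open>The three-dimensional right e(2)-module with basis X1,X2,X3 (coordinates)
  and action (X1,p_-) = -X3, (X2,p_+) = X3, (X1,l) = -X1, (X2,l) = X2,
  all other products of basis elements zero.\<close>

definition M_act :: "c3 \<Rightarrow> c3 \<Rightarrow> c3" where
  "M_act m u = (case m of (x1,x2,x3) \<Rightarrow> case u of (a,b,c) \<Rightarrow>
      (-(a*x1), a*x2, -(c*x1) + b*x2))"

text \<open>Multiplication table of K_2(alpha1,alpha2) in the basis
  l, p, q (= p_+, p_-), X1, X2, X3: all 36 products.\<close>

definition K2_table ::
  "(complex \<Rightarrow> 'a::ab_group_add \<Rightarrow> 'a) \<Rightarrow> ('a \<Rightarrow> 'a \<Rightarrow> 'a) \<Rightarrow> complex \<Rightarrow> complex \<Rightarrow>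
   'a \<Rightarrow> 'a \<Rightarrow> 'a \<Rightarrow> 'a \<Rightarrow> 'a \<Rightarrow> 'a \<Rightarrow> bool" where
  "K2_table smul br \<alpha>1 \<alpha>2 l p q X1 X2 X3 \<longleftrightarrow>
     br l l = smul \<alpha>1 X3 \<and> br l p = p \<and> br l q = - q \<and>
     br l X1 = 0 \<and> br l X2 = 0 \<and> br l X3 = 0 \<and>
     br p l = - p \<and> br p p = 0 \<and> br p q = smul \<alpha>2 X3 \<and>
     br p X1 = 0 \<and> br p X2 = 0 \<and> br p X3 = 0 \<and>
     br q l = q \<and> br q p = - smul \<alpha>2 X3 \<and> br q q = 0 \<and>
     br q X1 = 0 \<and> br q X2 = 0 \<and> br q X3 = 0 \<and>
     br X1 l = - X1 \<and> br X1 p = 0 \<and> br X1 q = - X3 \<and>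
     br X1 X1 = 0 \<and> br X1 X2 = 0 \<and> br X1 X3 = 0 \<and>
     br X2 l = X2 \<and> br X2 p = X3 \<and> br X2 q = 0 \<and>
     br X2 X1 = 0 \<and> br X2 X2 = 0 \<and> br X2 X3 = 0 \<and>
     br X3 l = 0 \<and> br X3 p = 0 \<and> br X3 q = 0 \<and>
     br X3 X1 = 0 \<and> br X3 X2 = 0 \<and> br X3 X3 = 0"

end

theory Submission imports Defs begin

locale Lsetup =
  fixes smul :: "complex \<Rightarrow> 'a::ab_group_add \<Rightarrow> 'a"
    and br :: "'a \<Rightarrow> 'a \<Rightarrow> 'a"
    and \<phi> :: "'a \<Rightarrow> c3" and \<psi> :: "'a \<Rightarrow> c3"
  assumes leib: "leibniz_algebra smul br"
    and phi_add: "\<And>x y. \<phi> (x + y) = c3_add (\<phi> x) (\<phi> y)"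
    and phi_smul: "\<And>c x. \<phi> (smul c x) = c3_smul c (\<phi> x)"
    and phi_surj: "surj \<phi>"
    and phi_ker: "{x. \<phi> x = (0,0,0)} = sq_ideal smul br"
    and phi_br: "\<And>x y. \<phi> (br x y) = e2_br (\<phi> x) (\<phi> y)"
    and psi_add: "\<And>x y. x \<in> sq_ideal smul br \<Longrightarrow> y \<in> sq_ideal smul br \<Longrightarrow>
                    \<psi> (x + y) = c3_add (\<psi> x) (\<psi> y)"
    and psi_smul: "\<And>c x. x \<in> sq_ideal smul br \<Longrightarrow> \<psi> (smul c x) = c3_smul c (\<psi> x)"
    and psi_bij: "bij_betw \<psi> (sq_ideal smul br) UNIV"
    and psi_act: "\<And>i x. i \<in> sq_ideal smul br \<Longrightarrow> \<psi> (br i x) = M_act (\<psi> i) (\<phi> x)"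
begin

abbreviation "I \<equiv> sq_ideal smul br"

lemma vs: "vector_space smul" using leib unfolding leibniz_algebra_def by blast

sublocale vs: vector_space smul by (rule vs)

lemma linR: "module_hom smul smul (br x)"
  using leib unfolding leibniz_algebra_def module_hom_iff_linear by blast
lemma linL: "module_hom smul smul (\<lambda>x. br x y)"
  using leib unfolding leibniz_algebra_def module_hom_iff_linear by blast

lemma leibniz: "br (br x y) z = br (br x z) y + br x (br y z)"
  using leib unfolding leibniz_algebra_def by blast

lemma br_addR: "br x (y + z) = br x y + br x z" by (rule module_hom.add[OF linR])
lemma br_addL: "br (x + y) z = br x z + br y z" using module_hom.add[OF linL] by blast
lemma br_smulR: "br x (smul c y) = smul c (br x y)" by (rule module_hom.scale[OF linR])
lemma br_smulL: "br (smul c x) y = smul c (br x y)" using module_hom.scale[OF linL] by blast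
lemma br_sumR: "br x (sum f A) = (\<Sum>a\<in>A. br x (f a))" by (rule module_hom.sum[OF linR])
lemma br_sumL: "br (sum f A) y = (\<Sum>a\<in>A. br (f a) y)" using module_hom.sum[OF linL] by blast
lemma br_zeroR: "br x 0 = 0" by (rule module_hom.zero[OF linR])
lemma br_zeroL: "br 0 y = 0" using module_hom.zero[OF linL] by blast

lemma memI: "x \<in> I \<longleftrightarrow> \<phi> x = (0,0,0)" using phi_ker by blast

lemma phi0: "\<phi> 0 = (0,0,0)"
proof -
  have "\<phi> 0 = c3_add (\<phi> 0) (\<phi> 0)" using phi_add[of 0 0] by simp
  then show ?thesis by (cases "\<phi> 0") (auto simp: c3_add_def)
qed

lemma zero_I: "0 \<in> I" using memI phi0 by simp

lemma psi0: "\<psi> 0 = (0,0,0)"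
proof -
  have "\<psi> 0 = c3_add (\<psi> 0) (\<psi> 0)" using psi_add[of 0 0] zero_I by simp
  then show ?thesis by (cases "\<psi> 0") (auto simp: c3_add_def)
qed

lemma add_I: "x \<in> I \<Longrightarrow> y \<in> I \<Longrightarrow> x + y \<in> I"
  by (simp add: memI phi_add c3_add_def)
lemma smul_I: "x \<in> I \<Longrightarrow> smul c x \<in> I"
  by (simp add: memI phi_smul c3_smul_def)
lemma brL_I: "x \<in> I \<Longrightarrow> br x y \<in> I"
  by (simp add: memI phi_br e2_br_def split: prod.splits)

lemma phi_neg: "\<phi> (- x) = (case \<phi> x of (a,b,c) \<Rightarrow> (-a,-b,-c))"
proof -
  have "\<phi> 0 = c3_add (\<phi> (-x)) (\<phi> x)" using phi_add[of "-x" x] by simp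
  then show ?thesis using phi0 by (cases "\<phi> x"; cases "\<phi> (-x)") (auto simp: c3_add_def eq_neg_iff_add_eq_0)
qed

lemma psi_inj: "x \<in> I \<Longrightarrow> y \<in> I \<Longrightarrow> \<psi> x = \<psi> y \<Longrightarrow> x = y"
  using psi_bij unfolding bij_betw_def inj_on_def by blast

lemma ann: "i \<in> I \<Longrightarrow> br x i = 0"
proof -
  let ?A = "{i. \<forall>x. br x i = 0}"
  have sub: "vs.subspace ?A"
    unfolding vs.subspace_def by (simp add: br_zeroR br_addR br_smulR)
  have "is_ideal smul br ?A"
    unfolding is_ideal_def using sub
  proof (auto simp: br_zeroR)
    fix x y z assume "\<forall>z. br z x = 0"
    then show "br z (br x y) = 0" using leibniz[of z x y] by (simp add: br_zeroL)
  qed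
  moreover have "\<forall>x. br x x \<in> ?A"
  proof
    fix y show "br y y \<in> ?A" using leibniz[of _ y y] by simp
  qed
  ultimately have "I \<subseteq> ?A" unfolding sq_ideal_def by blast
  then show "i \<in> I \<Longrightarrow> br x i = 0" by blast
qed

lemma sum6: "(\<Sum>i<(6::nat). f i) = f 0 + f 1 + f 2 + f 3 + f 4 + f (5::nat)"
  by (simp add: eval_nat_numeral ac_simps)

definition "l0 = inv \<phi> (1,0,0)"
definition "p0 = inv \<phi> (0,1,0)"
definition "q0 = inv \<phi> (0,0,1)"
definition "X1 = inv_into I \<psi> (1,0,0)"
definition "X2 = inv_into I \<psi> (0,1,0)"
definition "X3 = inv_into I \<psi> (0,0,1)"

lemma phi_l0: "\<phi> l0 = (1,0,0)" unfolding l0_def by (simp add: phi_surj surj_f_inv_f)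
lemma phi_p0: "\<phi> p0 = (0,1,0)" unfolding p0_def by (simp add: phi_surj surj_f_inv_f)
lemma phi_q0: "\<phi> q0 = (0,0,1)" unfolding q0_def by (simp add: phi_surj surj_f_inv_f)

lemma psi_img: "\<psi> ` I = UNIV" using psi_bij by (simp add: bij_betw_def)
lemma X1_I: "X1 \<in> I" unfolding X1_def by (rule inv_into_into) (simp add: psi_img)
lemma X2_I: "X2 \<in> I" unfolding X2_def by (rule inv_into_into) (simp add: psi_img)
lemma X3_I: "X3 \<in> I" unfolding X3_def by (rule inv_into_into) (simp add: psi_img)
lemma psi_X1: "\<psi> X1 = (1,0,0)" unfolding X1_def by (rule f_inv_into_f) (simp add: psi_img)
lemma psi_X2: "\<psi> X2 = (0,1,0)" unfolding X2_def by (rule f_inv_into_f) (simp add: psi_img)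
lemma psi_X3: "\<psi> X3 = (0,0,1)" unfolding X3_def by (rule f_inv_into_f) (simp add: psi_img)
lemma phi_X1: "\<phi> X1 = (0,0,0)" using X1_I memI by blast
lemma phi_X2: "\<phi> X2 = (0,0,0)" using X2_I memI by blast
lemma phi_X3: "\<phi> X3 = (0,0,0)" using X3_I memI by blast

definition "e i = [l0,p0,q0,X1,X2,X3] ! i"
definition "T x = (\<Sum>i<6. smul (x i) (e i))"

lemma T_expand: "T x = smul (x 0) l0 + smul (x 1) p0 + smul (x 2) q0 + smul (x 3) X1 + smul (x 4) X2 + smul (x 5) X3"
  unfolding T_def sum6 by (simp add: e_def numeral_eq_Suc)

lemma phi_T: "\<phi> (T x) = (x 0, x 1, x 2)"
  unfolding T_expand by (simp add: phi_add phi_smul c3_add_def c3_smul_def phi_l0 phi_p0 phi_q0 phi_X1 phi_X2 phi_X3)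

lemma comb_I: "smul a X1 + smul b X2 + smul c X3 \<in> I"
  by (intro add_I smul_I X1_I X2_I X3_I)

lemma psi_comb: "\<psi> (smul a X1 + smul b X2 + smul c X3) = (a,b,c)"
  by (simp add: psi_add psi_smul add_I smul_I X1_I X2_I X3_I psi_X1 psi_X2 psi_X3 c3_add_def c3_smul_def)

lemma T_comb: "x 0 = 0 \<Longrightarrow> x 1 = 0 \<Longrightarrow> x 2 = 0 \<Longrightarrow> T x = smul (x 3) X1 + smul (x 4) X2 + smul (x 5) X3"
  unfolding T_expand by simp

lemma T_add: "T (\<lambda>i. x i + y i) = T x + T y"
  unfolding T_def by (simp add: vs.scale_left_distrib sum.distrib)
lemma T_smul: "T (\<lambda>i. c * x i) = smul c (T x)"
  unfolding T_def by (simp add: vs.scale_sum_right)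
lemma T_diff: "T (\<lambda>i. x i - y i) = T x - T y"
  unfolding T_def by (simp add: vs.scale_left_diff_distrib sum_subtractf)
lemma T_neg: "T (\<lambda>i. - x i) = - T x"
  unfolding T_def by (simp add: sum_negf)
lemma T_zero_vec: "T (\<lambda>i. 0) = 0"
  unfolding T_def by simp

lemma T_zero: assumes "T x = 0" "k < 6" shows "x k = 0"
proof -
  have "\<phi> (T x) = (0,0,0)" using assms phi0 by simp
  then have a: "x 0 = 0" "x 1 = 0" "x 2 = 0" using phi_T by auto
  have "\<psi> (T x) = (x 3, x 4, x 5)" using T_comb[OF a] psi_comb by simp
  then have "x 3 = 0" "x 4 = 0" "x 5 = 0" using assms psi0 by auto
  with a assms(2) show ?thesis by (auto simp: less_Suc_eq numeral_eq_Suc)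
qed

lemma T_inj: assumes "T x = T y" "k < 6" shows "x k = y k"
  using T_zero[of "\<lambda>i. x i - y i" k] assms by (simp add: T_diff)

lemma T_eqI: "(\<And>k. k < 6 \<Longrightarrow> x k = y k) \<Longrightarrow> T x = T y"
  unfolding T_def by (rule sum.cong) auto

definition "lift y = smul (fst (\<phi> y)) l0 + smul (fst (snd (\<phi> y))) p0 + smul (snd (snd (\<phi> y))) q0"
definition "r y = \<psi> (y - lift y)"
definition co :: "'a \<Rightarrow> nat \<Rightarrow> complex" where "co y = (\<lambda>k. if k = 0 then fst (\<phi> y) else if k = 1 then fst (snd (\<phi> y))
   else if k = 2 then snd (snd (\<phi> y)) else if k = 3 then fst (r y) else if k = 4 then fst (snd (r y))
   else snd (snd (r y)))"

lemma phi_lift: "\<phi> (lift y) = \<phi> y"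
  unfolding lift_def by (cases "\<phi> y") (simp add: phi_add phi_smul c3_add_def c3_smul_def phi_l0 phi_p0 phi_q0)

lemma rest_I: "y - lift y \<in> I"
proof -
  have "\<phi> y = c3_add (\<phi> (y - lift y)) (\<phi> (lift y))" using phi_add[of "y - lift y" "lift y"] by simp
  then show ?thesis unfolding memI phi_lift
    by (cases "\<phi> y"; cases "\<phi> (y - lift y)") (auto simp: c3_add_def)
qed

lemma T_co: "T (co y) = y"
proof -
  obtain a b c where r: "r y = (a,b,c)" by (cases "r y") auto
  have "smul a X1 + smul b X2 + smul c X3 = y - lift y"
    using psi_inj[OF comb_I rest_I] psi_comb r unfolding r_def by simp
  then show ?thesis unfolding T_expand co_def lift_def using r by (simp add: algebra_simps)
qed

lemma co_I: assumes "y \<in> I" shows "co y 3 = fst (\<psi> y)" "co y 4 = fst (snd (\<psi> y))" "co y 5 = snd (snd (\<psi> y))"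
proof -
  have "lift y = 0" using assms memI unfolding lift_def by simp
  then show "co y 3 = fst (\<psi> y)" "co y 4 = fst (snd (\<psi> y))" "co y 5 = snd (snd (\<psi> y))"
    unfolding co_def r_def by simp_all
qed

lemma co_phi: "co y 0 = fst (\<phi> y)" "co y (Suc 0) = fst (snd (\<phi> y))" "co y 1 = fst (snd (\<phi> y))" "co y 2 = snd (snd (\<phi> y))"
  unfolding co_def by simp_all

definition S :: "nat \<Rightarrow> nat \<Rightarrow> nat \<Rightarrow> complex" where "S i j = co (br (e i) (e j))"
definition Bf :: "(nat \<Rightarrow> complex) \<Rightarrow> (nat \<Rightarrow> complex) \<Rightarrow> nat \<Rightarrow> complex" where
  "Bf x y = (\<lambda>k. \<Sum>i<6. \<Sum>j<6. x i * y j * S i j k)"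

lemma br_e: "br (e i) (e j) = T (S i j)" unfolding S_def by (simp add: T_co)

lemma br_T: "br (T x) (T y) = T (Bf x y)"
proof -
  have "br (T x) (T y) = (\<Sum>i<6. \<Sum>j<6. smul (x i * y j) (br (e i) (e j)))"
    unfolding T_def by (simp add: br_sumL br_sumR br_smulL br_smulR vs.scale_sum_right) (subst sum.swap, simp add: mult.commute)
  also have "\<dots> = (\<Sum>i<6. \<Sum>j<6. \<Sum>k<6. smul (x i * y j * S i j k) (e k))"
    unfolding br_e T_def by (simp add: vs.scale_sum_right)
  also have "\<dots> = (\<Sum>i<6. \<Sum>k<6. \<Sum>j<6. smul (x i * y j * S i j k) (e k))"
    by (rule sum.cong[OF refl], rule sum.swap)
  also have "\<dots> = (\<Sum>k<6. \<Sum>i<6. \<Sum>j<6. smul (x i * y j * S i j k) (e k))"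
    by (rule sum.swap)
  also have "\<dots> = T (Bf x y)"
    unfolding T_def Bf_def by (simp add: vs.scale_sum_left)
  finally show ?thesis .
qed

definition \<delta> :: "nat \<Rightarrow> nat \<Rightarrow> complex" where "\<delta> a = (\<lambda>i. if i = a then 1 else 0)"

lemma T_delta: "a < 6 \<Longrightarrow> T (\<delta> a) = e a"
proof -
  assume a: "a < 6"
  have "\<And>i. smul (\<delta> a i) (e i) = (if a = i then e i else 0)" by (simp add: \<delta>_def)
  then show ?thesis unfolding T_def using a by (simp add: sum.delta)
qed

lemma Bf_deltaR: "c < 6 \<Longrightarrow> Bf x (\<delta> c) k = (\<Sum>i<6. x i * S i c k)"
proof -
  assume a: "c < 6"
  have "\<And>i j. x i * \<delta> c j * S i j k = (if c = j then x i * S i j k else 0)" by (simp add: \<delta>_def)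
  then show ?thesis unfolding Bf_def using a by (simp add: sum.delta)
qed
lemma Bf_deltaL: "a < 6 \<Longrightarrow> Bf (\<delta> a) y k = (\<Sum>j<6. y j * S a j k)"
proof -
  assume a: "a < 6"
  have "\<And>i. (\<Sum>j<6. \<delta> a i * y j * S i j k) = (if a = i then (\<Sum>j<6. y j * S i j k) else 0)" by (simp add: \<delta>_def)
  then show ?thesis unfolding Bf_def using a by (simp add: sum.delta)
qed

lemma SL: assumes "a < 6" "b < 6" "c < 6" "k < 6"
  shows "(\<Sum>i<6. S a b i * S i c k) = (\<Sum>i<6. S a c i * S i b k) + (\<Sum>j<6. S b c j * S a j k)"
proof -
  have "br (br (e a) (e b)) (e c) = br (br (e a) (e c)) (e b) + br (e a) (br (e b) (e c))" by (rule leibniz)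
  then have "br (T (S a b)) (e c) = br (T (S a c)) (e b) + br (e a) (T (S b c))"
    unfolding br_e[of a b] br_e[of a c] br_e[of b c] .
  then have "br (T (S a b)) (T (\<delta> c)) = br (T (S a c)) (T (\<delta> b)) + br (T (\<delta> a)) (T (S b c))"
    using assms by (simp only: T_delta)
  then have "br (T (S a b)) (T (\<delta> c)) = br (T (S a c)) (T (\<delta> b)) + br (T (\<delta> a)) (T (S b c))" .
  then have "T (Bf (S a b) (\<delta> c)) = T (Bf (S a c) (\<delta> b)) + T (Bf (\<delta> a) (S b c))"
    unfolding br_T .
  then have "T (Bf (S a b) (\<delta> c)) = T (\<lambda>k. Bf (S a c) (\<delta> b) k + Bf (\<delta> a) (S b c) k)"
    by (simp add: T_add)
  from T_inj[OF this assms(4)] show ?thesis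
    by (simp only: Bf_deltaR[OF assms(3)] Bf_deltaR[OF assms(2)] Bf_deltaL[OF assms(1)])
qed

lemma e_simps: "e 0 = l0" "e (Suc 0) = p0" "e 1 = p0" "e 2 = q0" "e 3 = X1" "e 4 = X2" "e 5 = X3"
  by (simp_all add: e_def numeral_eq_Suc)

lemma co0: "co 0 k = 0" if "k < 6" for k
proof -
  have "co 0 3 = 0" "co 0 4 = 0" "co 0 5 = 0" using co_I[OF zero_I] psi0 by simp_all
  moreover have "co 0 0 = 0" "co 0 1 = 0" "co 0 2 = 0" using co_phi phi0 by simp_all
  ultimately show ?thesis using that by (auto simp: less_Suc_eq numeral_eq_Suc)
qed

lemma Svals [simp]:
  "S 0 0 0 = 0"
  "S 0 0 (Suc 0) = 0"
  "S 0 0 2 = 0"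
  "S 0 (Suc 0) 0 = 0"
  "S 0 (Suc 0) (Suc 0) = 1"
  "S 0 (Suc 0) 2 = 0"
  "S 0 2 0 = 0"
  "S 0 2 (Suc 0) = 0"
  "S 0 2 2 = - 1"
  "S 0 3 0 = 0"
  "S 0 3 (Suc 0) = 0"
  "S 0 3 2 = 0"
  "S 0 3 3 = 0"
  "S 0 3 4 = 0"
  "S 0 3 5 = 0"
  "S 0 4 0 = 0"
  "S 0 4 (Suc 0) = 0"
  "S 0 4 2 = 0"
  "S 0 4 3 = 0"
  "S 0 4 4 = 0"
  "S 0 4 5 = 0"
  "S 0 5 0 = 0"
  "S 0 5 (Suc 0) = 0"
  "S 0 5 2 = 0"
  "S 0 5 3 = 0"
  "S 0 5 4 = 0"
  "S 0 5 5 = 0"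
  "S (Suc 0) 0 0 = 0"
  "S (Suc 0) 0 (Suc 0) = - 1"
  "S (Suc 0) 0 2 = 0"
  "S (Suc 0) (Suc 0) 0 = 0"
  "S (Suc 0) (Suc 0) (Suc 0) = 0"
  "S (Suc 0) (Suc 0) 2 = 0"
  "S (Suc 0) 2 0 = 0"
  "S (Suc 0) 2 (Suc 0) = 0"
  "S (Suc 0) 2 2 = 0"
  "S (Suc 0) 3 0 = 0"
  "S (Suc 0) 3 (Suc 0) = 0"
  "S (Suc 0) 3 2 = 0"
  "S (Suc 0) 3 3 = 0"
  "S (Suc 0) 3 4 = 0"
  "S (Suc 0) 3 5 = 0"
  "S (Suc 0) 4 0 = 0"
  "S (Suc 0) 4 (Suc 0) = 0"
  "S (Suc 0) 4 2 = 0"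
  "S (Suc 0) 4 3 = 0"
  "S (Suc 0) 4 4 = 0"
  "S (Suc 0) 4 5 = 0"
  "S (Suc 0) 5 0 = 0"
  "S (Suc 0) 5 (Suc 0) = 0"
  "S (Suc 0) 5 2 = 0"
  "S (Suc 0) 5 3 = 0"
  "S (Suc 0) 5 4 = 0"
  "S (Suc 0) 5 5 = 0"
  "S 2 0 0 = 0"
  "S 2 0 (Suc 0) = 0"
  "S 2 0 2 = 1"
  "S 2 (Suc 0) 0 = 0"
  "S 2 (Suc 0) (Suc 0) = 0"
  "S 2 (Suc 0) 2 = 0"
  "S 2 2 0 = 0"
  "S 2 2 (Suc 0) = 0"
  "S 2 2 2 = 0"
  "S 2 3 0 = 0"
  "S 2 3 (Suc 0) = 0"
  "S 2 3 2 = 0"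
  "S 2 3 3 = 0"
  "S 2 3 4 = 0"
  "S 2 3 5 = 0"
  "S 2 4 0 = 0"
  "S 2 4 (Suc 0) = 0"
  "S 2 4 2 = 0"
  "S 2 4 3 = 0"
  "S 2 4 4 = 0"
  "S 2 4 5 = 0"
  "S 2 5 0 = 0"
  "S 2 5 (Suc 0) = 0"
  "S 2 5 2 = 0"
  "S 2 5 3 = 0"
  "S 2 5 4 = 0"
  "S 2 5 5 = 0"
  "S 3 0 0 = 0"
  "S 3 0 (Suc 0) = 0"
  "S 3 0 2 = 0"
  "S 3 0 3 = - 1"
  "S 3 0 4 = 0"
  "S 3 0 5 = 0"
  "S 3 (Suc 0) 0 = 0"
  "S 3 (Suc 0) (Suc 0) = 0"
  "S 3 (Suc 0) 2 = 0"
  "S 3 (Suc 0) 3 = 0"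
  "S 3 (Suc 0) 4 = 0"
  "S 3 (Suc 0) 5 = 0"
  "S 3 2 0 = 0"
  "S 3 2 (Suc 0) = 0"
  "S 3 2 2 = 0"
  "S 3 2 3 = 0"
  "S 3 2 4 = 0"
  "S 3 2 5 = - 1"
  "S 3 3 0 = 0"
  "S 3 3 (Suc 0) = 0"
  "S 3 3 2 = 0"
  "S 3 3 3 = 0"
  "S 3 3 4 = 0"
  "S 3 3 5 = 0"
  "S 3 4 0 = 0"
  "S 3 4 (Suc 0) = 0"
  "S 3 4 2 = 0"
  "S 3 4 3 = 0"
  "S 3 4 4 = 0"
  "S 3 4 5 = 0"
  "S 3 5 0 = 0"
  "S 3 5 (Suc 0) = 0"
  "S 3 5 2 = 0"
  "S 3 5 3 = 0"
  "S 3 5 4 = 0"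
  "S 3 5 5 = 0"
  "S 4 0 0 = 0"
  "S 4 0 (Suc 0) = 0"
  "S 4 0 2 = 0"
  "S 4 0 3 = 0"
  "S 4 0 4 = 1"
  "S 4 0 5 = 0"
  "S 4 (Suc 0) 0 = 0"
  "S 4 (Suc 0) (Suc 0) = 0"
  "S 4 (Suc 0) 2 = 0"
  "S 4 (Suc 0) 3 = 0"
  "S 4 (Suc 0) 4 = 0"
  "S 4 (Suc 0) 5 = 1"
  "S 4 2 0 = 0"
  "S 4 2 (Suc 0) = 0"
  "S 4 2 2 = 0"
  "S 4 2 3 = 0"
  "S 4 2 4 = 0"
  "S 4 2 5 = 0"
  "S 4 3 0 = 0"
  "S 4 3 (Suc 0) = 0"
  "S 4 3 2 = 0"
  "S 4 3 3 = 0"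
  "S 4 3 4 = 0"
  "S 4 3 5 = 0"
  "S 4 4 0 = 0"
  "S 4 4 (Suc 0) = 0"
  "S 4 4 2 = 0"
  "S 4 4 3 = 0"
  "S 4 4 4 = 0"
  "S 4 4 5 = 0"
  "S 4 5 0 = 0"
  "S 4 5 (Suc 0) = 0"
  "S 4 5 2 = 0"
  "S 4 5 3 = 0"
  "S 4 5 4 = 0"
  "S 4 5 5 = 0"
  "S 5 0 0 = 0"
  "S 5 0 (Suc 0) = 0"
  "S 5 0 2 = 0"
  "S 5 0 3 = 0"
  "S 5 0 4 = 0"
  "S 5 0 5 = 0"
  "S 5 (Suc 0) 0 = 0"
  "S 5 (Suc 0) (Suc 0) = 0"
  "S 5 (Suc 0) 2 = 0"
  "S 5 (Suc 0) 3 = 0"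
  "S 5 (Suc 0) 4 = 0"
  "S 5 (Suc 0) 5 = 0"
  "S 5 2 0 = 0"
  "S 5 2 (Suc 0) = 0"
  "S 5 2 2 = 0"
  "S 5 2 3 = 0"
  "S 5 2 4 = 0"
  "S 5 2 5 = 0"
  "S 5 3 0 = 0"
  "S 5 3 (Suc 0) = 0"
  "S 5 3 2 = 0"
  "S 5 3 3 = 0"
  "S 5 3 4 = 0"
  "S 5 3 5 = 0"
  "S 5 4 0 = 0"
  "S 5 4 (Suc 0) = 0"
  "S 5 4 2 = 0"
  "S 5 4 3 = 0"
  "S 5 4 4 = 0"
  "S 5 4 5 = 0"
  "S 5 5 0 = 0"
  "S 5 5 (Suc 0) = 0"
  "S 5 5 2 = 0"
  "S 5 5 3 = 0"
  "S 5 5 4 = 0"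
  "S 5 5 5 = 0"
  by (simp_all add: S_def e_simps co_phi co_I brL_I X1_I X2_I X3_I ann co0 phi_br e2_br_def
      phi_l0 phi_p0 phi_q0 phi_X1 phi_X2 phi_X3 psi_act M_act_def psi_X1 psi_X2 psi_X3 phi0 psi0)

lemma SLs: "a < 6 \<Longrightarrow> b < 6 \<Longrightarrow> c < 6 \<Longrightarrow> k < 6 \<Longrightarrow>
  (\<Sum>i<6. S a b i * S i c k) = (\<Sum>i<6. S a c i * S i b k) + (\<Sum>j<6. S b c j * S a j k)"
  by (rule SL)

lemma cons:
  "S 2 0 3 = -2 * S 0 2 3"
  "S (Suc 0) 0 5 = S 0 0 4 - S 0 (Suc 0) 5"
  "S (Suc 0) 0 3 = 0"
  "S (Suc 0) 0 4 = -2 * S 0 (Suc 0) 4"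
  "S 2 0 4 = 0"
  "S 2 0 5 = S 0 0 3 - S 0 2 5"
  "S (Suc 0) (Suc 0) 3 = 0" "S (Suc 0) (Suc 0) 4 = 0"
  "S (Suc 0) 2 3 = 0" "S (Suc 0) 2 4 = 0"
  "S 2 (Suc 0) 3 = 0" "S 2 (Suc 0) 4 = 0"
  "S 2 2 3 = 0" "S 2 2 4 = 0"
  "S (Suc 0) (Suc 0) 5 = - S 0 (Suc 0) 4"
  "S 2 2 5 = - S 0 2 3"
  "S 2 (Suc 0) 5 = S 0 (Suc 0) 3 + S 0 2 4 - S (Suc 0) 2 5"
proof -
  have e1: "- (2 * S 0 2 3) = S 2 0 3" using SL[of 0 0 2 3] by (simp add: sum6)
  have e2: "S 0 0 4 = S (Suc 0) 0 5 + S 0 (Suc 0) 5" using SL[of 0 0 1 5] by (simp add: sum6)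
  have e3: "S (Suc 0) 0 3 = 0" using SL[of 0 0 1 3] by (simp add: sum6)
  have e4: "2 * S 0 (Suc 0) 4 + S (Suc 0) 0 4 = 0" using SL[of 0 0 1 4] by (simp add: sum6)
  have e5: "S 2 0 4 = 0" using SL[of 0 0 2 4] by (simp add: sum6)
  have e6: "- S 0 0 3 = - S 2 0 5 - S 0 2 5" using SL[of 0 0 2 5] by (simp add: sum6)
  have e7: "S (Suc 0) (Suc 0) 3 = 0" using SL[of 1 0 1 3] by (simp add: sum6)
  have e8: "S (Suc 0) 0 4 = 2 * S (Suc 0) (Suc 0) 5" using SL[of 1 0 1 5] by (simp add: sum6)
  have e9: "S (Suc 0) 2 4 = 0" using SL[of 1 0 2 4] by (simp add: sum6)
  have e10: "S (Suc 0) (Suc 0) 4 = 0" using SL[of 1 0 1 4] by (simp add: sum6)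
  have e11: "S (Suc 0) 2 3 = 0" using SL[of 1 0 2 3] by (simp add: sum6)
  have e12: "S 2 (Suc 0) 3 = 0" using SL[of 2 0 1 3] by (simp add: sum6)
  have e13: "S 2 (Suc 0) 4 = 0" using SL[of 2 0 1 4] by (simp add: sum6)
  have e14: "S 2 2 3 = 0" using SL[of 2 0 2 3] by (simp add: sum6)
  have e15: "2 * S 2 2 5 = S 2 0 3" using SL[of 2 0 2 5] by (simp add: sum6)
  have e16: "S 2 2 4 = 0" using SL[of 2 0 2 4] by (simp add: sum6)
  have e17: "S (Suc 0) 2 5 - S 0 (Suc 0) 3 = S 0 2 4 - S 2 (Suc 0) 5" using SL[of 0 1 2 5] by (simp add: sum6)
  show "S 2 0 3 = -2 * S 0 2 3" using e1 by simp
  show "S (Suc 0) 0 5 = S 0 0 4 - S 0 (Suc 0) 5" using e2 by simp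
  show "S (Suc 0) 0 3 = 0" by (rule e3)
  show "S (Suc 0) 0 4 = -2 * S 0 (Suc 0) 4" using e4 by (simp add: eq_neg_iff_add_eq_0 add.commute)
  show "S 2 0 4 = 0" by (rule e5)
  show "S 2 0 5 = S 0 0 3 - S 0 2 5" using e6 by (simp add: algebra_simps)
  show "S (Suc 0) (Suc 0) 3 = 0" "S (Suc 0) (Suc 0) 4 = 0" "S (Suc 0) 2 3 = 0" "S (Suc 0) 2 4 = 0"
    "S 2 (Suc 0) 3 = 0" "S 2 (Suc 0) 4 = 0" "S 2 2 3 = 0" "S 2 2 4 = 0" by fact+
  have "2 * S (Suc 0) (Suc 0) 5 = 2 * (- S 0 (Suc 0) 4)" using e4 e8 by (simp add: algebra_simps eq_neg_iff_add_eq_0)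
  then show "S (Suc 0) (Suc 0) 5 = - S 0 (Suc 0) 4" by simp
  have "2 * S 2 2 5 = 2 * (- S 0 2 3)" using e1 e15 by simp
  then show "S 2 2 5 = - S 0 2 3" by simp
  show "S 2 (Suc 0) 5 = S 0 (Suc 0) 3 + S 0 2 4 - S (Suc 0) 2 5" using e17 by (simp add: algebra_simps)
qed

lemma all_less6: "(\<forall>k<6. P k) \<longleftrightarrow> P 0 \<and> P (Suc 0) \<and> P 2 \<and> P 3 \<and> P 4 \<and> P (5::nat)"
proof -
  have "\<And>k. k < 6 \<longleftrightarrow> k = 0 \<or> k = Suc 0 \<or> k = 2 \<or> k = 3 \<or> k = 4 \<or> k = (5::nat)" by arith
  then show ?thesis by auto
qed

lemma T_eq_iff: "T x = T y \<longleftrightarrow> (\<forall>k<6. x k = y k)"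
  using T_inj T_eqI by blast
lemma T_eq0_iff: "T x = 0 \<longleftrightarrow> (\<forall>k<6. x k = 0)"
  using T_eq_iff[of x "\<lambda>i. 0"] T_zero_vec by simp
lemma smul_T: "smul c (T x) = T (\<lambda>i. c * x i)" by (simp add: T_smul)
lemma neg_T: "- T x = T (\<lambda>i. - x i)" by (simp add: T_neg)
lemma add_T: "T x + T y = T (\<lambda>i. x i + y i)" by (simp add: T_add)

definition vec6 :: "complex \<Rightarrow> complex \<Rightarrow> complex \<Rightarrow> complex \<Rightarrow> complex \<Rightarrow> complex \<Rightarrow> nat \<Rightarrow> complex" where
  "vec6 a b c d f g = (\<lambda>i. if i = 0 then a else if i = 1 then b else if i = 2 then c
     else if i = 3 then d else if i = 4 then f else g)"

definition "lv = vec6 1 0 0 (S 0 0 3) (- S 0 0 4) 0"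
definition "pv = vec6 0 1 0 (S 0 1 3) (S 0 1 4) (S 0 1 5 - S 0 0 4)"
definition "qv = vec6 0 0 1 (- S 0 2 3) (- S 0 2 4) (S 0 0 3 - S 0 2 5)"
definition "x1v = vec6 0 0 0 1 0 0"
definition "x2v = vec6 0 0 0 0 1 0"
definition "x3v = vec6 0 0 0 0 0 1"

lemma X_T: "X1 = T x1v" "X2 = T x2v" "X3 = T x3v"
  by (simp_all add: T_expand x1v_def x2v_def x3v_def vec6_def)

lemma vec6_simps [simp]: "vec6 a b c d f g 0 = a" "vec6 a b c d f g (Suc 0) = b" "vec6 a b c d f g 2 = c"
  "vec6 a b c d f g 3 = d" "vec6 a b c d f g 4 = f" "vec6 a b c d f g 5 = g"
  by (simp_all add: vec6_def)

lemma table: "K2_table smul br (S 0 0 5) (S 1 2 5 - S 0 1 3) (T lv) (T pv) (T qv) (T x1v) (T x2v) (T x3v)"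
  unfolding K2_table_def br_T smul_T neg_T
  by (intro conjI; simp add: T_eq_iff T_eq0_iff all_less6 Bf_def sum6 cons
     lv_def pv_def qv_def x1v_def x2v_def x3v_def algebra_simps)

lemma dist: "distinct [T lv, T pv, T qv, T x1v, T x2v, T x3v]"
  by (simp add: T_eq_iff all_less6 lv_def pv_def qv_def x1v_def x2v_def x3v_def)

lemma indep: "vs.independent {T lv, T pv, T qv, T x1v, T x2v, T x3v}"
proof
  assume "vs.dependent {T lv, T pv, T qv, T x1v, T x2v, T x3v}"
  then obtain u where u: "\<exists>v \<in> {T lv, T pv, T qv, T x1v, T x2v, T x3v}. u v \<noteq> 0"
    "(\<Sum>v\<in>{T lv, T pv, T qv, T x1v, T x2v, T x3v}. smul (u v) v) = 0"
    by (auto simp: vs.dependent_finite)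
  have "(\<Sum>v\<in>{T lv, T pv, T qv, T x1v, T x2v, T x3v}. smul (u v) v) =
     smul (u (T lv)) (T lv) + (smul (u (T pv)) (T pv) + (smul (u (T qv)) (T qv) +
     (smul (u (T x1v)) (T x1v) + (smul (u (T x2v)) (T x2v) + smul (u (T x3v)) (T x3v)))))"
    using dist by simp
  with u(2) have "T (\<lambda>i. u (T lv) * lv i + (u (T pv) * pv i + (u (T qv) * qv i +
     (u (T x1v) * x1v i + (u (T x2v) * x2v i + u (T x3v) * x3v i))))) = 0"
    by (simp only: smul_T add_T)
  then have "u (T lv) = 0 \<and> u (T pv) = 0 \<and> u (T qv) = 0 \<and> u (T x1v) = 0 \<and> u (T x2v) = 0 \<and> u (T x3v) = 0"
    unfolding T_eq0_iff all_less6 lv_def pv_def qv_def x1v_def x2v_def x3v_def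
    by (simp, elim conjE, simp)
  with u(1) show False by auto
qed

lemma spanning: "vs.span {T lv, T pv, T qv, T x1v, T x2v, T x3v} = UNIV"
proof -
  have "y \<in> vs.span {T lv, T pv, T qv, T x1v, T x2v, T x3v}" for y
  proof -
    define x where "x = co y"
    have y: "y = T x" unfolding x_def by (simp add: T_co)
    have "T x = smul (x 0) (T lv) + smul (x 1) (T pv) + smul (x 2) (T qv)
       + smul (x 3 - x 0 * S 0 0 3 - x 1 * S 0 1 3 + x 2 * S 0 2 3) (T x1v)
       + smul (x 4 + x 0 * S 0 0 4 - x 1 * S 0 1 4 + x 2 * S 0 2 4) (T x2v)
       + smul (x 5 - x 1 * (S 0 1 5 - S 0 0 4) - x 2 * (S 0 0 3 - S 0 2 5)) (T x3v)"
      unfolding smul_T add_T T_eq_iff all_less6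
      by (simp add: lv_def pv_def qv_def x1v_def x2v_def x3v_def algebra_simps)
    then show ?thesis unfolding y
      by (simp add: vs.span_add vs.span_scale vs.span_base)
  qed
  then show ?thesis by blast
qed

lemma main: "\<exists>\<alpha>1 \<alpha>2 l p q X1 X2 X3.
           distinct [l, p, q, X1, X2, X3] \<and>
           module.independent smul {l, p, q, X1, X2, X3} \<and>
           module.span smul {l, p, q, X1, X2, X3} = UNIV \<and>
           X1 \<in> sq_ideal smul br \<and> X2 \<in> sq_ideal smul br \<and> X3 \<in> sq_ideal smul br \<and>
           K2_table smul br \<alpha>1 \<alpha>2 l p q X1 X2 X3"
  using dist indep spanning table X_T X1_I X2_I X3_I by metis

end

theorem mainTheorem4:
  fixes smul :: "complex \<Rightarrow> 'a::ab_group_add \<Rightarrow> 'a"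
    and br :: "'a \<Rightarrow> 'a \<Rightarrow> 'a"
    and \<phi> :: "'a \<Rightarrow> c3" and \<psi> :: "'a \<Rightarrow> c3"
  assumes leib: "leibniz_algebra smul br"
    \<comment> \<open>phi induces a Lie algebra isomorphism L/I \<cong> e(2)\<close>
    and phi_add: "\<And>x y. \<phi> (x + y) = c3_add (\<phi> x) (\<phi> y)"
    and phi_smul: "\<And>c x. \<phi> (smul c x) = c3_smul c (\<phi> x)"
    and phi_surj: "surj \<phi>"
    and phi_ker: "{x. \<phi> x = (0,0,0)} = sq_ideal smul br"
    and phi_br: "\<And>x y. \<phi> (br x y) = e2_br (\<phi> x) (\<phi> y)"
    \<comment> \<open>psi is an isomorphism of right e(2)-modules I \<cong> M\<close>
    and psi_add: "\<And>x y. x \<in> sq_ideal smul br \<Longrightarrow> y \<in> sq_ideal smul br \<Longrightarrow>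
                    \<psi> (x + y) = c3_add (\<psi> x) (\<psi> y)"
    and psi_smul: "\<And>c x. x \<in> sq_ideal smul br \<Longrightarrow> \<psi> (smul c x) = c3_smul c (\<psi> x)"
    and psi_bij: "bij_betw \<psi> (sq_ideal smul br) UNIV"
    and psi_act: "\<And>i x. i \<in> sq_ideal smul br \<Longrightarrow> \<psi> (br i x) = M_act (\<psi> i) (\<phi> x)"
  shows "\<exists>\<alpha>1 \<alpha>2 l p q X1 X2 X3.
           distinct [l, p, q, X1, X2, X3] \<and>
           module.independent smul {l, p, q, X1, X2, X3} \<and>
           module.span smul {l, p, q, X1, X2, X3} = UNIV \<and>
           X1 \<in> sq_ideal smul br \<and> X2 \<in> sq_ideal smul br \<and> X3 \<in> sq_ideal smul br \<and>
           K2_table smul br \<alpha>1 \<alpha>2 l p q X1 X2 X3"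
proof -
  interpret Lsetup smul br \<phi> \<psi>
    by (unfold_locales; fact)
  show ?thesis by (rule main)
qed

end
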